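(* Let $\textsc{mix}$ be a nice mixture with parameter space $\mathcal{W}$ and constant $a>0$, let $n\ge1$, $x^n\in\mathcal{X}^n$, $\mathbf{P}^n$ a sequence of $n$ probability matrices over $\mathcal{P}_+$, and $\mathbf{w}_1\in\mathcal{W}$. For $1\le i\le j\le n$ write $\ell^*(i,j,\textsc{mix}):=\ell^*(x_i^j,\mathbf{P}_i^j,\textsc{mix})$, where $x_i^j=x_i\dots x_j$ and $\mathbf{P}_i^j=\mathbf{P}_i,\dots,\mathbf{P}_j$. The minima below range over all $1\le s\le n$ and all integers $t_1=1<t_2<\dots<t_s<t_{s+1}=n+1$. 1. If $\alpha=2(1-b^{-1})/a$ with $b>1$, then $$\ell(x^n,\textsc{mix-ogd}(\mathbf{w}_1,\alpha,x^n,\mathbf{P}^n))\le\min_{s,t_2,\dots,t_s}\Big[\frac{a b^2\lvert\mathcal{W}\rvert^2}{4(b-1)}\,s + b\sum_{i=1}^s\ell^*(t_i,t_{i+1}-1,\textsc{mix})\Big].$$ 2. If $\alpha=\frac{2}{a}(1+n^{1/2})^{-1}$ and there is a constant $c>0$ such that $\ell^*(y^k,\mathbf{Q}^k,\textsc{mix})\le c\cdot k$ for all lengths $k\ge1$, all $y^k$ over $\mathcal{X}$ and all sequences $\mathbf{Q}^k$ of probability matrices over $\mathcal{P}_+$, then $$\ell(x^n,\textsc{mix-ogd}(\mathbf{w}_1,\alpha,x^n,\mathbf{P}^n))\le\min_{s,t_2,\dots,t_s}\Big[\big(a s\lvert\mathcal{W}\rvert^2+c\big)\sqrt n+\sum_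{i=1}^s\ell^*(t_i,t_{i+1}-1,\textsc{mix})\Big].$$
   Context: Let $\mathcal{X}=\{1,\dots,N\}$ with $1<N<\infty$, and $\mathcal{P}_+$ the set of probability distributions on $\mathcal{X}$ with positive probability on every letter. Fix $m>1$. A probability matrix over $\mathcal{P}_+$ is $\mathbf{P}=(\mathbf{p}(1)\cdots\mathbf{p}(N))$ with $\mathbf{p}(x)=(p_1(x),\dots,p_m(x))^{\mathsf T}$, $p_i\in\mathcal{P}_+$. $\ell(x,p):=-\log_2p(x)$. A mixture with parameter space $\mathcal{W}\subseteq\mathbb{R}^m$ maps $(\mathbf{w},\mathbf{P})$, $\mathbf{w}\in\mathcal{W}$, to $\textsc{mix}(\mathbf{w},\mathbf{P})\in\mathcal{P}_+$. It is nice if (1) $\mathcal{W}$ is non-empty, compact, convex; (2) $\mathbf{w}\mapsto\ell(x,\textsc{mix}(\mathbf{w},\mathbf{P}))$ is convex on $\mathcal{W}$ and (3) differentiable, for all $\mathbf{P}$ over $\mathcal{P}_+$, $x\in\mathcal{X}$; (4) there is $a>0$ with $\lvert\nabla_{\mathbf{w}}\ell(x,\textsc{mix}(\mathbf{w},\mathbf{P}))\rvert^2\le a\,\ell(x,\textsc{mix}(\mathbf{w},\mathbf{P}))$ for all $\mathbf{w}\in\mathcal{W}$, $\mathbf{P}$, $x$. $\lvert\mathcal{W}\rvert:=\sup_{\mathbf{u},\mathbf{v}\in\mathcal{W}}\lvert\mathbf{u}-\mathbf{v}\rvert$ (Euclidean diameter). Algorithm $\textsc{mix-ogd}(\mathbf{w}_1,\alpha,x^n,\mathbf{P}^n)$: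 for $k=1,\dots,n$ code $x_k$ with $\ell(x_k,\textsc{mix}(\mathbf{w}_k,\mathbf{P}_k))$ bits, then $\mathbf{w}_{k+1}=\mathrm{proj}(\mathbf{w}_k-\alpha\nabla_{\mathbf{w}}\ell(x_k,\textsc{mix}(\mathbf{w},\mathbf{P}_k))|_{\mathbf{w}=\mathbf{w}_k};\mathcal{W})$ with $\mathrm{proj}(\mathbf{v};\mathcal{W})=\arg\min_{\mathbf{w}\in\mathcal{W}}\lvert\mathbf{v}-\mathbf{w}\rvert^2$; its code length is $\ell(x^n,\textsc{mix-ogd}(\mathbf{w}_1,\alpha,x^n,\mathbf{P}^n)):=\sum_{k=1}^n\ell(x_k,\textsc{mix}(\mathbf{w}_k,\mathbf{P}_k))$. For a sequence $y^k$ and matrices $\mathbf{Q}^k$: $\ell^*(y^k,\mathbf{Q}^k,\textsc{mix}):=\min_{\mathbf{w}\in\mathcal{W}}\sum_{j=1}^k\ell(y_j,\textsc{mix}(\mathbf{w},\mathbf{Q}_j))$. *)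

theory Defs
  imports "HOL-Analysis.Analysis"
begin

(* Alphabet X = finite type 'a (CARD('a) > 1 assumed in the theorem);
   mixture components indexed by finite type 'm (CARD('m) = m > 1). *)

definition Pplus :: "('a::finite \<Rightarrow> real) set" where
  "Pplus = {p. (\<forall>x. p x > 0) \<and> (\<Sum>x\<in>UNIV. p x) = 1}"

definition prob_matrix :: "('m::finite \<Rightarrow> 'a::finite \<Rightarrow> real) \<Rightarrow> bool" where
  "prob_matrix P \<longleftrightarrow> (\<forall>i. P i \<in> Pplus)"

definition ell :: "'a \<Rightarrow> ('a \<Rightarrow> real) \<Rightarrow> real" where
  "ell x p = - log 2 (p x)"

definition grad :: "(real^'m \<Rightarrow> real) \<Rightarrow> real^'m \<Rightarrow> real^'m" where
  "grad f w = (SOME D. GDERIV f w :> D)"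

definition nice_mixture ::
  "(real^'m::finite) set \<Rightarrow> (real^'m \<Rightarrow> ('m \<Rightarrow> 'a::finite \<Rightarrow> real) \<Rightarrow> ('a \<Rightarrow> real)) \<Rightarrow> real \<Rightarrow> bool" where
  "nice_mixture W mix a \<longleftrightarrow>
     (\<forall>w\<in>W. \<forall>P. prob_matrix P \<longrightarrow> mix w P \<in> Pplus) \<and>
     W \<noteq> {} \<and> compact W \<and> convex W \<and>
     (\<forall>P x. prob_matrix P \<longrightarrow> convex_on W (\<lambda>w. ell x (mix w P))) \<and>
     (\<forall>P x. prob_matrix P \<longrightarrow> (\<forall>w\<in>W. (\<lambda>v. ell x (mix v P)) differentiable (at w))) \<and>
     a > 0 \<and>
     (\<forall>P x. prob_matrix P \<longrightarrow> (\<forall>w\<in>W.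
        (norm (grad (\<lambda>v. ell x (mix v P)) w))\<^sup>2 \<le> a * ell x (mix w P)))"

(* weights of MIX-OGD: ogd_w ... k = w_{k+1}; sequences xs, Ps are indexed from 1 *)
fun ogd_w :: "(real^'m::finite) set \<Rightarrow> (real^'m \<Rightarrow> ('m \<Rightarrow> 'a \<Rightarrow> real) \<Rightarrow> ('a \<Rightarrow> real))
   \<Rightarrow> real \<Rightarrow> real^'m \<Rightarrow> (nat \<Rightarrow> 'a) \<Rightarrow> (nat \<Rightarrow> ('m \<Rightarrow> 'a \<Rightarrow> real)) \<Rightarrow> nat \<Rightarrow> real^'m" where
  "ogd_w W mix \<alpha> w1 xs Ps 0 = w1"
| "ogd_w W mix \<alpha> w1 xs Ps (Suc k) =
     closest_point W (ogd_w W mix \<alpha> w1 xs Ps k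
        - \<alpha> *\<^sub>R grad (\<lambda>w. ell (xs (Suc k)) (mix w (Ps (Suc k)))) (ogd_w W mix \<alpha> w1 xs Ps k))"

definition ogd_len :: "(real^'m::finite) set \<Rightarrow> (real^'m \<Rightarrow> ('m \<Rightarrow> 'a \<Rightarrow> real) \<Rightarrow> ('a \<Rightarrow> real))
   \<Rightarrow> real \<Rightarrow> real^'m \<Rightarrow> (nat \<Rightarrow> 'a) \<Rightarrow> (nat \<Rightarrow> ('m \<Rightarrow> 'a \<Rightarrow> real)) \<Rightarrow> nat \<Rightarrow> real" where
  "ogd_len W mix \<alpha> w1 xs Ps n =
     (\<Sum>k=1..n. ell (xs k) (mix (ogd_w W mix \<alpha> w1 xs Ps (k - 1)) (Ps k)))"

definition lstar :: "(real^'m::finite) set \<Rightarrow> (real^'m \<Rightarrow> ('m \<Rightarrow> 'a \<Rightarrow> real) \<Rightarrow> ('a \<Rightarrow> real))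
   \<Rightarrow> (nat \<Rightarrow> 'a) \<Rightarrow> (nat \<Rightarrow> ('m \<Rightarrow> 'a \<Rightarrow> real)) \<Rightarrow> nat \<Rightarrow> nat \<Rightarrow> real" where
  "lstar W mix ys Qs i j = (INF w\<in>W. \<Sum>k=i..j. ell (ys k) (mix w (Qs k)))"

definition segmentation :: "nat \<Rightarrow> nat \<Rightarrow> (nat \<Rightarrow> nat) \<Rightarrow> bool" where
  "segmentation n s t \<longleftrightarrow> 1 \<le> s \<and> s \<le> n \<and> t 1 = 1 \<and> t (s + 1) = n + 1 \<and>
     (\<forall>i\<in>{1..s}. t i < t (i + 1))"

end

theory Submission
  imports Defs
begin

lemma ell_nonneg: assumes "p \<in> Pplus" shows "0 \<le> ell x p"
proof -
  have pos: "\<And>y. p y > 0" and s: "sum p UNIV = 1" using assms by (auto simp: Pplus_def)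
  have "p x \<le> sum p UNIV" by (rule member_le_sum) (auto intro: less_imp_le pos)
  then have "p x \<le> 1" using s by simp
  then have "log 2 (p x) \<le> 0" using pos[of x] by simp
  then show ?thesis by (simp add: ell_def)
qed

lemma grad_has:
  fixes f :: "real^'m::finite \<Rightarrow> real"
  assumes "f differentiable (at w)"
  shows "(f has_derivative (\<lambda>h. h \<bullet> grad f w)) (at w)"
proof -
  obtain D where D: "(f has_derivative D) (at w)" using assms differentiable_def by blast
  have lin: "linear D" using D has_derivative_linear by blast
  have "\<And>h. D h = h \<bullet> adjoint D 1" using adjoint_works[OF lin, of _ 1] by (simp add: inner_real_def)
  then have "D = (\<lambda>h. h \<bullet> adjoint D 1)" by auto
  then have "GDERIV f w :> adjoint D 1" using D by (simp add: gderiv_def)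
  then have "GDERIV f w :> grad f w" unfolding grad_def by (rule someI)
  then show ?thesis by (simp add: gderiv_def)
qed

lemma tangent:
  fixes f :: "real^'m::finite \<Rightarrow> real"
  assumes cv: "convex_on W f" and w: "w \<in> W" and u: "u \<in> W"
    and der: "(f has_derivative (\<lambda>h. h \<bullet> g)) (at w)"
  shows "f w + (u - w) \<bullet> g \<le> f u"
proof -
  define d where "d = u - w"
  define h where "h t = f (w + t *\<^sub>R d)" for t :: real
  have "((\<lambda>t. w + t *\<^sub>R d) has_derivative (\<lambda>t. t *\<^sub>R d)) (at 0)"
    by (auto intro!: derivative_eq_intros)
  moreover have der': "(f has_derivative (\<lambda>h. h \<bullet> g)) (at (w + 0 *\<^sub>R d))" using der by simp
  ultimately have "(h has_derivative (\<lambda>t. (t *\<^sub>R d) \<bullet> g)) (at 0)"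
    using diff_chain_at unfolding h_def o_def by fastforce
  moreover have "(\<lambda>t. (t *\<^sub>R d) \<bullet> g) = (\<lambda>t. (d \<bullet> g) * t)"
    by (auto simp: inner_scaleR_left mult.commute)
  ultimately have "(h has_field_derivative (d \<bullet> g)) (at 0)"
    unfolding has_field_derivative_def by simp
  then have "((\<lambda>y. (h y - h 0) / (y - 0)) \<longlongrightarrow> d \<bullet> g) (at 0)"
    using has_field_derivative_iff by blast
  then have lim: "((\<lambda>y. (h y - h 0) / y) \<longlongrightarrow> d \<bullet> g) (at_right 0)"
    by (auto intro: tendsto_mono at_le)
  have ev: "eventually (\<lambda>y. (h y - h 0) / y \<le> f u - f w) (at_right 0)"
    using eventually_at_right_real[OF zero_less_one]
  proof (rule eventually_mono)
    fix y :: real assume y: "y \<in> {0<..<1}"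
    have "w + y *\<^sub>R d = (1 - y) *\<^sub>R w + y *\<^sub>R u" by (simp add: d_def algebra_simps)
    then have "h y \<le> (1 - y) * f w + y * f u"
      using convex_onD[OF cv, of y w u] y w u by (simp add: h_def)
    then have "h y - h 0 \<le> y * (f u - f w)" by (simp add: h_def algebra_simps)
    then show "(h y - h 0) / y \<le> f u - f w" using y by (simp add: divide_le_eq mult.commute)
  qed
  have "d \<bullet> g \<le> f u - f w"
    by (rule tendsto_le[OF _ tendsto_const lim ev]) simp
  then show ?thesis by (simp add: d_def)
qed

lemma ogd_in:
  assumes nice: "nice_mixture W mix a" and w1: "w1 \<in> W"
  shows "ogd_w W mix \<alpha> w1 xs Ps k \<in> W"
proof (induction k)
  case 0 then show ?case using w1 by simp
next
  case (Suc k)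
  have "closed W" "W \<noteq> {}" using nice by (auto simp: nice_mixture_def compact_imp_closed)
  then show ?case by (simp add: closest_point_in_set)
qed

lemma step:
  assumes nice: "nice_mixture W mix a" and w1: "w1 \<in> W" and al: "\<alpha> > 0"
    and pm: "prob_matrix (Ps (Suc j))" and u: "u \<in> W"
  shows "(2*\<alpha> - \<alpha>^2*a) * ell (xs (Suc j)) (mix (ogd_w W mix \<alpha> w1 xs Ps j) (Ps (Suc j)))
     \<le> 2*\<alpha> * ell (xs (Suc j)) (mix u (Ps (Suc j)))
       + (norm (ogd_w W mix \<alpha> w1 xs Ps j - u))^2 - (norm (ogd_w W mix \<alpha> w1 xs Ps (Suc j) - u))^2"
proof -
  define w where "w = ogd_w W mix \<alpha> w1 xs Ps j"
  define f where "f = (\<lambda>v. ell (xs (Suc j)) (mix v (Ps (Suc j))))"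
  define g where "g = grad f w"
  have wW: "w \<in> W" unfolding w_def using ogd_in[OF nice w1] .
  have nxt: "ogd_w W mix \<alpha> w1 xs Ps (Suc j) = closest_point W (w - \<alpha> *\<^sub>R g)"
    by (simp add: w_def g_def f_def)
  have cW: "closed W" "W \<noteq> {}" "convex W" using nice by (auto simp: nice_mixture_def compact_imp_closed)
  have dif: "f differentiable (at w)" using nice pm wW by (auto simp: nice_mixture_def f_def)
  have cvx: "convex_on W f" using nice pm by (auto simp: nice_mixture_def f_def)
  have gb: "(norm g)^2 \<le> a * f w" using nice pm wW by (auto simp: nice_mixture_def f_def g_def)
  have tan: "f w + (u - w) \<bullet> g \<le> f u"
    using tangent[OF cvx wW u] grad_has[OF dif] by (simp add: g_def)
  have "dist (closest_point W (w - \<alpha> *\<^sub>R g)) (closest_point W u) \<le> dist (w - \<alpha> *\<^sub>R g) u"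
    using closest_point_lipschitz[OF cW(3,1,2)] .
  then have lip: "norm (closest_point W (w - \<alpha> *\<^sub>R g) - u) \<le> norm ((w - u) - \<alpha> *\<^sub>R g)"
    using closest_point_self[OF u] by (simp add: dist_norm algebra_simps)
  then have sq: "(norm (closest_point W (w - \<alpha> *\<^sub>R g) - u))^2 \<le> (norm ((w - u) - \<alpha> *\<^sub>R g))^2"
    by (simp add: power_mono)
  have ex: "(norm ((w - u) - \<alpha> *\<^sub>R g))^2 = (norm (w-u))^2 - 2*\<alpha>*((w-u) \<bullet> g) + \<alpha>^2 * (norm g)^2"
    unfolding power2_norm_eq_inner by (simp add: inner_diff_left inner_diff_right inner_commute algebra_simps power2_eq_square)
  have t2: "(w-u) \<bullet> g \<ge> f w - f u" using tan by (simp add: inner_diff_left)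
  have m1: "\<alpha>^2 * (norm g)^2 \<le> \<alpha>^2 * (a * f w)" using gb by (simp add: mult_left_mono)
  have m2: "2*\<alpha>*((w-u) \<bullet> g) \<ge> 2*\<alpha>*(f w - f u)" using t2 al by simp
  have e1: "(2*\<alpha> - \<alpha>^2*a) * f w = 2*\<alpha>* f w - \<alpha>^2*(a* f w)" by (simp add: algebra_simps)
  have e2: "2*\<alpha>*(f w - f u) = 2*\<alpha>* f w - 2*\<alpha>* f u" by (simp add: algebra_simps)
  have "(2*\<alpha> - \<alpha>^2*a) * f w \<le> 2*\<alpha> * f u + (norm (w - u))^2 - (norm (closest_point W (w - \<alpha> *\<^sub>R g) - u))^2"
    using sq ex m1 m2 e1 e2 by linarith
  then show ?thesis unfolding nxt by (simp add: f_def w_def)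
qed

lemma segment:
  assumes nice: "nice_mixture W mix a" and w1: "w1 \<in> W" and al: "\<alpha> > 0"
    and pm: "\<forall>k\<in>{1..n}. prob_matrix (Ps k)" and pq: "1 \<le> p" "p \<le> q" "q \<le> n + 1"
  shows "(2*\<alpha> - \<alpha>^2*a) * (\<Sum>k\<in>{p..<q}. ell (xs k) (mix (ogd_w W mix \<alpha> w1 xs Ps (k - 1)) (Ps k)))
     \<le> 2*\<alpha> * lstar W mix xs Ps p (q - 1) + (diameter W)^2"
proof -
  define F where "F k = ell (xs k) (mix (ogd_w W mix \<alpha> w1 xs Ps (k - 1)) (Ps k))" for k
  define N where "N u j = (norm (ogd_w W mix \<alpha> w1 xs Ps j - u))^2" for u j
  have Wne: "W \<noteq> {}" and bdd: "bounded W" using nice by (auto simp: nice_mixture_def compact_imp_bounded)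
  have shift: "(\<Sum>k\<in>{p..<q}. G k) = (\<Sum>j\<in>{p-1..<q-1}. G (Suc j))" for G :: "nat \<Rightarrow> real"
  proof -
    have "{p..<q} = {Suc (p-1)..<Suc (q-1)}" using pq by auto
    then show ?thesis by (simp only: sum.shift_bounds_Suc_ivl)
  qed
  have "(2*\<alpha> - \<alpha>^2*a) * sum F {p..<q} - (diameter W)^2 \<le> 2*\<alpha> * (\<Sum>k=p..q-1. ell (xs k) (mix u (Ps k)))"
    if u: "u \<in> W" for u
  proof -
    have "(2*\<alpha> - \<alpha>^2*a) * sum F {p..<q} = (\<Sum>j\<in>{p-1..<q-1}. (2*\<alpha> - \<alpha>^2*a) * F (Suc j))"
      by (simp add: shift sum_distrib_left)
    also have "\<dots> \<le> (\<Sum>j\<in>{p-1..<q-1}. 2*\<alpha> * ell (xs (Suc j)) (mix u (Ps (Suc j))) + (N u j - N u (Suc j)))"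
    proof (rule sum_mono)
      fix j assume j: "j \<in> {p-1..<q-1}"
      then have "prob_matrix (Ps (Suc j))" using pm pq by auto
      from step[where Ps=Ps and j=j and xs=xs, OF nice w1 al this u] show "(2*\<alpha> - \<alpha>^2*a) * F (Suc j)
          \<le> 2*\<alpha> * ell (xs (Suc j)) (mix u (Ps (Suc j))) + (N u j - N u (Suc j))"
        by (simp add: F_def N_def)
    qed
    also have "\<dots> = 2*\<alpha> * (\<Sum>j\<in>{p-1..<q-1}. ell (xs (Suc j)) (mix u (Ps (Suc j)))) + (N u (p-1) - N u (q-1))"
    proof -
      have "(\<Sum>j\<in>{p-1..<q-1}. (N u j - N u (Suc j))) = - (\<Sum>j\<in>{p-1..<q-1}. (N u (Suc j) - N u j))"
        by (simp add: sum_negf[symmetric])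
      also have "\<dots> = N u (p-1) - N u (q-1)" using pq by (simp add: sum_Suc_diff')
      finally show ?thesis by (simp add: sum.distrib sum_distrib_left)
    qed
    also have "(\<Sum>j\<in>{p-1..<q-1}. ell (xs (Suc j)) (mix u (Ps (Suc j)))) = (\<Sum>k=p..q-1. ell (xs k) (mix u (Ps k)))"
    proof -
      have "{p..q-1} = {p..<q}" using pq by auto
      then show ?thesis by (simp add: shift)
    qed
    finally have A: "(2*\<alpha> - \<alpha>^2*a) * sum F {p..<q} \<le> 2*\<alpha> * (\<Sum>k=p..q-1. ell (xs k) (mix u (Ps k))) + (N u (p-1) - N u (q-1))" .
    have "norm (ogd_w W mix \<alpha> w1 xs Ps (p-1) - u) \<le> diameter W"
      using diameter_bounded_bound[OF bdd ogd_in[OF nice w1] u] by (simp add: dist_norm)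
    then have "N u (p-1) \<le> (diameter W)^2" unfolding N_def by (simp add: power_mono)
    moreover have "N u (q-1) \<ge> 0" by (simp add: N_def)
    ultimately show ?thesis using A by linarith
  qed
  then have "((2*\<alpha> - \<alpha>^2*a) * sum F {p..<q} - (diameter W)^2) / (2*\<alpha>) \<le> lstar W mix xs Ps p (q - 1)"
    unfolding lstar_def using al Wne by (intro cINF_greatest) (auto simp: divide_le_eq mult.commute)
  then show ?thesis using al by (simp add: divide_le_eq F_def algebra_simps)
qed

lemma mono_t:
  fixes s :: nat and t :: "nat \<Rightarrow> nat"
  assumes "\<forall>i\<in>{1..s}. t i \<le> t (i + 1)" "1 \<le> i"
  shows "i \<le> j \<Longrightarrow> j \<le> s + 1 \<Longrightarrow> t i \<le> t j"
proof (induction j)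
  case 0 then show ?case using assms(2) by simp
next
  case (Suc j)
  show ?case
  proof (cases "i = Suc j")
    case True then show ?thesis by simp
  next
    case False
    then have "i \<le> j" using Suc by simp
    then have "t i \<le> t j" using Suc by simp
    moreover have "t j \<le> t (j + 1)" using assms(1) Suc \<open>i \<le> j\<close> assms(2) by auto
    ultimately show ?thesis by simp
  qed
qed

lemma seg_sum:
  fixes s :: nat and t :: "nat \<Rightarrow> nat"
  assumes "\<forall>i\<in>{1..s}. t i \<le> t (i + 1)"
  shows "(\<Sum>i=1..s. sum F {t i..<t (i+1)}) = sum F {t 1..<t (s+1)}"
  using assms
proof (induction s)
  case 0 then show ?case by simp
next
  case (Suc s)
  have "t 1 \<le> t (Suc s)" using mono_t[OF Suc.prems, of 1 "Suc s"] by simp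
  moreover have "t (Suc s) \<le> t (Suc s + 1)" using Suc.prems by auto
  ultimately show ?case using Suc by (simp add: sum.atLeastLessThan_concat)
qed

lemma main_bound:
  assumes nice: "nice_mixture W mix a" and w1: "w1 \<in> W" and al: "\<alpha> > 0"
    and pm: "\<forall>k\<in>{1..n}. prob_matrix (Ps k)" and seg: "segmentation n s t"
  shows "(2*\<alpha> - \<alpha>^2*a) * ogd_len W mix \<alpha> w1 xs Ps n
     \<le> 2*\<alpha> * (\<Sum>i=1..s. lstar W mix xs Ps (t i) (t (i + 1) - 1)) + real s * (diameter W)^2"
proof -
  define F where "F k = ell (xs k) (mix (ogd_w W mix \<alpha> w1 xs Ps (k - 1)) (Ps k))" for k
  have st: "1 \<le> s" "t 1 = 1" "t (s+1) = n + 1" "\<forall>i\<in>{1..s}. t i < t (i + 1)"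
    using seg by (auto simp: segmentation_def)
  have le: "\<forall>i\<in>{1..s}. t i \<le> t (i + 1)" using st(4) by (simp add: less_imp_le)
  have "ogd_len W mix \<alpha> w1 xs Ps n = sum F {1..<n+1}"
    unfolding ogd_len_def F_def by (simp add: atLeastLessThanSuc_atLeastAtMost)
  also have "\<dots> = (\<Sum>i=1..s. sum F {t i..<t (i+1)})" using seg_sum[OF le, of F] st by simp
  finally have L: "ogd_len W mix \<alpha> w1 xs Ps n = (\<Sum>i=1..s. sum F {t i..<t (i+1)})" .
  have "(2*\<alpha> - \<alpha>^2*a) * ogd_len W mix \<alpha> w1 xs Ps n = (\<Sum>i=1..s. (2*\<alpha> - \<alpha>^2*a) * sum F {t i..<t (i+1)})"
    by (simp add: L sum_distrib_left)
  also have "\<dots> \<le> (\<Sum>i=1..s. 2*\<alpha> * lstar W mix xs Ps (t i) (t (i + 1) - 1) + (diameter W)^2)"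
  proof (rule sum_mono)
    fix i assume i: "i \<in> {1..s}"
    have "1 \<le> t i" using mono_t[OF le, of 1 i] st i by auto
    moreover have "t (i+1) \<le> n + 1" using mono_t[OF le, of "i+1" "s+1"] st i by auto
    moreover have "t i \<le> t (i+1)" using le i by auto
    ultimately show "(2*\<alpha> - \<alpha>^2*a) * sum F {t i..<t (i+1)} \<le> 2*\<alpha> * lstar W mix xs Ps (t i) (t (i + 1) - 1) + (diameter W)^2"
      using segment[OF nice w1 al pm, of "t i" "t (i+1)" xs] unfolding F_def by simp
  qed
  also have "\<dots> = 2*\<alpha> * (\<Sum>i=1..s. lstar W mix xs Ps (t i) (t (i + 1) - 1)) + real s * (diameter W)^2"
    by (simp add: sum.distrib sum_distrib_left)
  finally show ?thesis .
qed

lemma lstar_sum_bound: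
  fixes W :: "(real^'m::finite) set"
    and mix :: "real^'m \<Rightarrow> ('m \<Rightarrow> 'a::finite \<Rightarrow> real) \<Rightarrow> ('a \<Rightarrow> real)"
    and xs :: "nat \<Rightarrow> 'a" and Ps :: "nat \<Rightarrow> ('m \<Rightarrow> 'a \<Rightarrow> real)"
  assumes hyp: "\<forall>k::nat. k \<ge> 1 \<longrightarrow> (\<forall>(ys :: nat \<Rightarrow> 'a) (Qs :: nat \<Rightarrow> ('m \<Rightarrow> 'a \<Rightarrow> real)).
                (\<forall>j\<in>{1..k}. prob_matrix (Qs j)) \<longrightarrow> lstar W mix ys Qs 1 k \<le> c * real k)"
    and pm: "\<forall>k\<in>{1..n}. prob_matrix (Ps k)" and seg: "segmentation n s t"
  shows "(\<Sum>i=1..s. lstar W mix xs Ps (t i) (t (i + 1) - 1)) \<le> c * real n"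
proof -
  have st: "1 \<le> s" "t 1 = 1" "t (s+1) = n + 1" "\<forall>i\<in>{1..s}. t i < t (i + 1)"
    using seg by (auto simp: segmentation_def)
  have le: "\<forall>i\<in>{1..s}. t i \<le> t (i + 1)" using st(4) by (simp add: less_imp_le)
  have "(\<Sum>i=1..s. lstar W mix xs Ps (t i) (t (i + 1) - 1)) \<le> (\<Sum>i=1..s. c * (real (t (Suc i)) - real (t i)))"
  proof (rule sum_mono)
    fix i assume i: "i \<in> {1..s}"
    define p where "p = t i"
    define q where "q = t (i+1)"
    define d where "d = p - 1"
    define len where "len = q - p"
    have p1: "1 \<le> p" using mono_t[OF le, of 1 i] st i by (auto simp: p_def)
    have qn: "q \<le> n + 1" using mono_t[OF le, of "i+1" "s+1"] st i by (auto simp: q_def)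
    have pq: "p < q" using st(4) i by (auto simp: p_def q_def)
    have set: "{p..q-1} = {1+d..len+d}" using p1 pq by (auto simp: d_def len_def)
    have "lstar W mix xs Ps p (q - 1) = lstar W mix (\<lambda>j. xs (j + d)) (\<lambda>j. Ps (j + d)) 1 len"
      unfolding lstar_def set by (simp only: sum.shift_bounds_cl_nat_ivl)
    also have "\<dots> \<le> c * real len"
    proof -
      have l1: "len \<ge> 1" using pq by (simp add: len_def)
      have pmj: "\<forall>j\<in>{1..len}. prob_matrix (Ps (j + d))"
      proof
        fix j assume "j \<in> {1..len}"
        then have "j + d \<in> {1..n}" using p1 pq qn by (auto simp: len_def d_def)
        then show "prob_matrix (Ps (j + d))" using pm by blast
      qed
      show ?thesis using hyp[rule_format, OF l1, of "\<lambda>j. Ps (j + d)" "\<lambda>j. xs (j + d)"] pmj by blast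
    qed
    also have "\<dots> = c * (real (t (Suc i)) - real (t i))" using pq by (simp add: len_def p_def q_def of_nat_diff)
    finally show "lstar W mix xs Ps (t i) (t (i + 1) - 1) \<le> c * (real (t (Suc i)) - real (t i))"
      by (simp add: p_def q_def)
  qed
  also have "\<dots> = c * (real (t (Suc s)) - real (t 1))"
    using sum_Suc_diff[of 1 s "\<lambda>i. real (t i)"] by (simp add: sum_distrib_left[symmetric])
  also have "\<dots> = c * real n" using st by simp
  finally show ?thesis .
qed

theorem theorem1:
  fixes W :: "(real^'m::finite) set"
    and mix :: "real^'m \<Rightarrow> ('m \<Rightarrow> 'a::finite \<Rightarrow> real) \<Rightarrow> ('a \<Rightarrow> real)"
    and a :: real and n :: nat and xs :: "nat \<Rightarrow> 'a"
    and Ps :: "nat \<Rightarrow> ('m \<Rightarrow> 'a \<Rightarrow> real)" and w1 :: "real^'m"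
  assumes "CARD('a) > 1" and "CARD('m) > 1"
    and "nice_mixture W mix a"
    and "n \<ge> 1"
    and "\<forall>k\<in>{1..n}. prob_matrix (Ps k)"
    and "w1 \<in> W"
  shows "(\<forall>b::real. b > 1 \<longrightarrow>
            (\<forall>s t. segmentation n s t \<longrightarrow>
               ogd_len W mix (2 * (1 - 1 / b) / a) w1 xs Ps n
                 \<le> a * b\<^sup>2 * (diameter W)\<^sup>2 / (4 * (b - 1)) * real s
                   + b * (\<Sum>i=1..s. lstar W mix xs Ps (t i) (t (i + 1) - 1))))
       \<and> (\<forall>c::real. c > 0 \<longrightarrow>
            (\<forall>k::nat. k \<ge> 1 \<longrightarrow> (\<forall>(ys :: nat \<Rightarrow> 'a) (Qs :: nat \<Rightarrow> ('m \<Rightarrow> 'a \<Rightarrow> real)).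
                (\<forall>j\<in>{1..k}. prob_matrix (Qs j)) \<longrightarrow> lstar W mix ys Qs 1 k \<le> c * real k)) \<longrightarrow>
            (\<forall>s t. segmentation n s t \<longrightarrow>
               ogd_len W mix (2 / a * inverse (1 + sqrt (real n))) w1 xs Ps n
                 \<le> (a * real s * (diameter W)\<^sup>2 + c) * sqrt (real n)
                   + (\<Sum>i=1..s. lstar W mix xs Ps (t i) (t (i + 1) - 1))))"
proof -
  have nice: "nice_mixture W mix a" and w1: "w1 \<in> W" and pm: "\<forall>k\<in>{1..n}. prob_matrix (Ps k)"
    using assms by auto
  have a0: "a > 0" using nice by (simp add: nice_mixture_def)
  have P1: "ogd_len W mix (2 * (1 - 1 / b) / a) w1 xs Ps n
                 \<le> a * b\<^sup>2 * (diameter W)\<^sup>2 / (4 * (b - 1)) * real s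
                   + b * (\<Sum>i=1..s. lstar W mix xs Ps (t i) (t (i + 1) - 1))"
    if b: "b > 1" and seg: "segmentation n s t" for b :: real and s t
  proof -
    define \<alpha> where "\<alpha> = 2 * (1 - 1 / b) / a"
    define L where "L = ogd_len W mix \<alpha> w1 xs Ps n"
    define S where "S = (\<Sum>i=1..s. lstar W mix xs Ps (t i) (t (i + 1) - 1))"
    define D where "D = (diameter W)\<^sup>2"
    have al: "\<alpha> > 0" using b a0 by (simp add: \<alpha>_def field_simps)
    have MB: "(2*\<alpha> - \<alpha>^2*a) * L \<le> 2*\<alpha> * S + real s * D"
      using main_bound[OF nice w1 al pm seg, of xs] by (simp add: L_def S_def D_def)
    have K: "2*\<alpha> - \<alpha>^2*a = 2*\<alpha>/b" using b a0 by (simp add: \<alpha>_def field_simps power2_eq_square)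
    have "L = (b/(2*\<alpha>)) * ((2*\<alpha> - \<alpha>^2*a) * L)" using K al b by (simp add: field_simps)
    also have "\<dots> \<le> (b/(2*\<alpha>)) * (2*\<alpha> * S + real s * D)"
      using MB al b by (intro mult_left_mono) auto
    also have "\<dots> = b * S + (b/(2*\<alpha>)) * D * real s" using al by (simp add: field_simps)
    also have "b/(2*\<alpha>) = a * b\<^sup>2 / (4 * (b - 1))" using b a0 by (simp add: \<alpha>_def field_simps power2_eq_square)
    finally show ?thesis by (simp add: L_def S_def D_def \<alpha>_def algebra_simps)
  qed
  have P2: "ogd_len W mix (2 / a * inverse (1 + sqrt (real n))) w1 xs Ps n
                 \<le> (a * real s * (diameter W)\<^sup>2 + c) * sqrt (real n)
                   + (\<Sum>i=1..s. lstar W mix xs Ps (t i) (t (i + 1) - 1))"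
    if c: "c > 0" and hyp: "\<forall>k::nat. k \<ge> 1 \<longrightarrow> (\<forall>(ys :: nat \<Rightarrow> 'a) (Qs :: nat \<Rightarrow> ('m \<Rightarrow> 'a \<Rightarrow> real)).
                (\<forall>j\<in>{1..k}. prob_matrix (Qs j)) \<longrightarrow> lstar W mix ys Qs 1 k \<le> c * real k)"
      and seg: "segmentation n s t" for c :: real and s t
  proof -
    define r where "r = sqrt (real n)"
    define \<alpha> where "\<alpha> = 2 / a * inverse (1 + r)"
    define L where "L = ogd_len W mix \<alpha> w1 xs Ps n"
    define S where "S = (\<Sum>i=1..s. lstar W mix xs Ps (t i) (t (i + 1) - 1))"
    define D where "D = (diameter W)\<^sup>2"
    define X where "X = a * real s * D"
    define T where "T = (X + c) * r + S"
    have r1: "r \<ge> 1" using assms(4) by (simp add: r_def)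
    have rr: "r^2 = real n" by (simp add: r_def)
    have X0: "X \<ge> 0" using a0 by (simp add: X_def D_def)
    have al: "\<alpha> > 0" using r1 a0 by (simp add: \<alpha>_def)
    have ar: "a * (1 + r) \<noteq> 0" "1 + r \<noteq> 0" using r1 a0 by auto
    have aa: "\<alpha> * a * (1 + r) = 2" using ar a0 by (simp add: \<alpha>_def field_simps)
    have MB: "(2*\<alpha> - \<alpha>^2*a) * L \<le> 2*\<alpha> * S + real s * D"
      using main_bound[OF nice w1 al pm seg, of xs] by (simp add: L_def S_def D_def)
    have K: "2*\<alpha> - \<alpha>^2*a = (2*\<alpha>/(1+r)) * r"
    proof -
      have "\<alpha>^2*a = \<alpha> * (\<alpha> * a * (1 + r)) / (1 + r)" using r1 by (simp add: field_simps power2_eq_square)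
      also have "\<dots> = 2*\<alpha>/(1+r)" using aa by simp
      finally show ?thesis using r1 by (simp add: field_simps)
    qed
    have Sle: "S \<le> c * r^2" using lstar_sum_bound[OF hyp pm seg] rr by (simp add: S_def)
    have "(1 + r)^2 \<le> (2*r)^2" using r1 by (intro power_mono) auto
    then have "X * (1 + r)^2 \<le> X * (2*r)^2" using X0 by (rule mult_left_mono)
    then have key: "(1+r)*S + real s * D * (a*(1+r)^2/4) \<le> r*T"
      using Sle by (simp add: T_def X_def field_simps power2_eq_square)
    have "2*\<alpha> * S + real s * D = (2*\<alpha>/(1+r)) * ((1+r)*S + real s * D * (a*(1+r)^2/4))"
    proof -
      have "(2*\<alpha>/(1+r)) * (real s * D * (a*(1+r)^2/4)) = real s * D * ((\<alpha> * a * (1 + r)) / 2)"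
        using r1 by (simp add: field_simps power2_eq_square)
      then have e1: "(2*\<alpha>/(1+r)) * (real s * D * (a*(1+r)^2/4)) = real s * D" using aa by simp
      have e2: "(2*\<alpha>/(1+r)) * ((1+r)*S) = 2*\<alpha>*S" using ar by simp
      show ?thesis using e1 e2 by (simp only: distrib_left)
    qed
    also have "\<dots> \<le> (2*\<alpha>/(1+r)) * (r*T)" using key al r1 by (intro mult_left_mono) auto
    finally have "(2*\<alpha> - \<alpha>^2*a) * L \<le> (2*\<alpha> - \<alpha>^2*a) * T" using MB K by (simp add: mult.assoc)
    moreover have "2*\<alpha> - \<alpha>^2*a > 0" using K al r1 by simp
    ultimately have "L \<le> T" by simp
    then show ?thesis by (simp add: L_def T_def X_def D_def S_def \<alpha>_def r_def)
  qed
  show ?thesis using P1 P2 by blast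
qed

end
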